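(* Let $k\ge2$, let $f:(k+1)^V\to\mathbb{R}_{\ge0}$ be non-negative and $k$-submodular with multilinear extension $F$, let $OPT=\max_{S\in(k+1)^V}f(S)$, and let $c>0$. Consider the meta-framework with step $\delta=1/N$, and suppose that at every iteration $t$ the direction $v(t)$ satisfies the following property, where $y=\nabla F(s(t))$ (i.e. $y_{i,j}=\frac{\partial F}{\partial x_{i,j}}(s(t))$): for every $a\in\mathbb{R}^{n\times k}$ with $a_{i,j}+a_{i,j'}\ge 0$ for all $i$ and all $j\neq j'$, and $a_{i,j}\le y_{i,j}$ for all $i,j$, and for every map $j^*:[n]\to[k]$, $$\sum_{i\in[n]}\sum_{j\in[k]}v_{i,j}(t)\big(a_{i,j^*(i)}-a_{i,j}\big)\ \le\ c\sum_{i\in[n]}\sum_{j\in[k]}v_{i,j}(t)\,y_{i,j}.$$ Then for every $\varepsilon>0$ there is $N_0$ (depending on $n,k,c,f,\varepsilon$) such that for all $N\ge N_0$, the output satisfies $s(N)\in\mathcal P$ and $F(s(N))\ge\frac{1}{c+1}OPT-\varepsilon$.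
   Context: Let $V=[n]=\{1,\dots,n\}$ and let $k\ge 1$ be an integer. Write $(k+1)^V$ for the set of $k$-tuples $S=(S_1,\dots,S_k)$ of pairwise disjoint subsets of $V$. For $S,T\in(k+1)^V$ let $S\sqcap T=(S_1\cap T_1,\dots,S_k\cap T_k)$ and let $S\sqcup T$ be the tuple whose $j$-th component is $(S_j\cup T_j)\setminus\bigcup_{l\neq j}(S_l\cup T_l)$. A function $f:(k+1)^V\to\mathbb{R}$ is $k$-submodular if $f(S)+f(T)\ge f(S\sqcap T)+f(S\sqcup T)$ for all $S,T\in(k+1)^V$. Let $\mathcal P=\{x\in[0,1]^{n\times k}:\sum_{j=1}^k x_{i,j}\le 1\ \forall i\in[n]\}$. The multilinear extension of $f$ is the polynomial $F(x)=\sum_{S\in(k+1)^V} f(S_1,\dots,S_k)\Big(\prod_{j\in[k]}\prod_{i\in S_j}x_{i,j}\Big)\prod_{i\in V\setminus\bigcup_j S_j}\Big(1-\sum_{j=1}^k x_{i,j}\Big)$, considered on $\mathcal P$. Meta-framework: fix a positive integer $N$ and $\delta=1/N$. Set $s(0)=0\in\mathbb{R}^{n\times k}$. For $t=0,1,\dots,N-1$, choose a direction $v(t)\in[0,1]^{n\times k}$ with $\sum_{j=1}^k v_{i,j}(t)=1$ for every $i\in[n]$ (the choice may depend on $s(t)$ and on $F$), and set $s(t+1)=s(t)+\delta\,v(t)$. The output is $s(N)$. *)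

theory Defs
  imports "HOL-Analysis.Analysis"
begin

text \<open>A k-tuple (S_1,...,S_k) of pairwise disjoint subsets of V = {1..n} is represented
  as a function S :: nat \<Rightarrow> nat set with S j the j-th component for j in {1..k},
  and S j = {} for j outside {1..k}.\<close>

definition orthants :: "nat \<Rightarrow> nat \<Rightarrow> (nat \<Rightarrow> nat set) set" where
  "orthants n k = {S. (\<forall>j\<in>{1..k}. S j \<subseteq> {1..n})
                     \<and> (\<forall>j. j \<notin> {1..k} \<longrightarrow> S j = {})
                     \<and> (\<forall>j\<in>{1..k}. \<forall>j'\<in>{1..k}. j \<noteq> j' \<longrightarrow> S j \<inter> S j' = {})}"

definition kmeet :: "(nat \<Rightarrow> nat set) \<Rightarrow> (nat \<Rightarrow> nat set) \<Rightarrow> (nat \<Rightarrow> nat set)" where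
  "kmeet S T = (\<lambda>j. S j \<inter> T j)"

definition kjoin :: "nat \<Rightarrow> (nat \<Rightarrow> nat set) \<Rightarrow> (nat \<Rightarrow> nat set) \<Rightarrow> (nat \<Rightarrow> nat set)" where
  "kjoin k S T = (\<lambda>j. if j \<in> {1..k}
       then (S j \<union> T j) - (\<Union>l\<in>{1..k} - {j}. S l \<union> T l) else {})"

definition k_submodular :: "nat \<Rightarrow> nat \<Rightarrow> ((nat \<Rightarrow> nat set) \<Rightarrow> real) \<Rightarrow> bool" where
  "k_submodular n k f = (\<forall>S\<in>orthants n k. \<forall>T\<in>orthants n k.
       f S + f T \<ge> f (kmeet S T) + f (kjoin k S T))"

text \<open>Points of R^{n x k} are functions x :: nat \<Rightarrow> nat \<Rightarrow> real, x i j = x_{i,j};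
  only entries with i in {1..n}, j in {1..k} are relevant.\<close>

definition polytopeP :: "nat \<Rightarrow> nat \<Rightarrow> (nat \<Rightarrow> nat \<Rightarrow> real) set" where
  "polytopeP n k = {x. (\<forall>i\<in>{1..n}. \<forall>j\<in>{1..k}. 0 \<le> x i j \<and> x i j \<le> 1)
                      \<and> (\<forall>i\<in>{1..n}. (\<Sum>j=1..k. x i j) \<le> 1)}"

definition multilinear_ext ::
  "nat \<Rightarrow> nat \<Rightarrow> ((nat \<Rightarrow> nat set) \<Rightarrow> real) \<Rightarrow> (nat \<Rightarrow> nat \<Rightarrow> real) \<Rightarrow> real" where
  "multilinear_ext n k f x = (\<Sum>S\<in>orthants n k. f S
       * (\<Prod>j\<in>{1..k}. \<Prod>i\<in>S j. x i j)
       * (\<Prod>i\<in>{1..n} - (\<Union>j\<in>{1..k}. S j). 1 - (\<Sum>j=1..k. x i j)))"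

definition partial_ij ::
  "((nat \<Rightarrow> nat \<Rightarrow> real) \<Rightarrow> real) \<Rightarrow> (nat \<Rightarrow> nat \<Rightarrow> real) \<Rightarrow> nat \<Rightarrow> nat \<Rightarrow> real" where
  "partial_ij G x i j = deriv (\<lambda>t. G (x(i := (x i)(j := t)))) (x i j)"

primrec traj :: "real \<Rightarrow> (nat \<Rightarrow> nat \<Rightarrow> nat \<Rightarrow> real) \<Rightarrow> nat \<Rightarrow> (nat \<Rightarrow> nat \<Rightarrow> real)" where
  "traj \<delta> v 0 = (\<lambda>i j. 0)"
| "traj \<delta> v (Suc t) = (\<lambda>i j. traj \<delta> v t i j + \<delta> * v t i j)"

definition valid_direction :: "nat \<Rightarrow> nat \<Rightarrow> (nat \<Rightarrow> nat \<Rightarrow> real) \<Rightarrow> bool" where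
  "valid_direction n k w = ((\<forall>i\<in>{1..n}. \<forall>j\<in>{1..k}. 0 \<le> w i j \<and> w i j \<le> 1)
                           \<and> (\<forall>i\<in>{1..n}. (\<Sum>j=1..k. w i j) = 1))"

definition good_direction ::
  "nat \<Rightarrow> nat \<Rightarrow> real \<Rightarrow> (nat \<Rightarrow> nat \<Rightarrow> real) \<Rightarrow> (nat \<Rightarrow> nat \<Rightarrow> real) \<Rightarrow> bool" where
  "good_direction n k c y w =
     (\<forall>a :: nat \<Rightarrow> nat \<Rightarrow> real. \<forall>jstar :: nat \<Rightarrow> nat.
        (\<forall>i\<in>{1..n}. \<forall>j\<in>{1..k}. \<forall>j'\<in>{1..k}. j \<noteq> j' \<longrightarrow> a i j + a i j' \<ge> 0)
      \<longrightarrow> (\<forall>i\<in>{1..n}. \<forall>j\<in>{1..k}. a i j \<le> y i j)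
      \<longrightarrow> (\<forall>i\<in>{1..n}. jstar i \<in> {1..k})
      \<longrightarrow> (\<Sum>i=1..n. \<Sum>j=1..k. w i j * (a i (jstar i) - a i j))
            \<le> c * (\<Sum>i=1..n. \<Sum>j=1..k. w i j * y i j))"

end

theory Submission
  imports Defs
begin

definition ee :: "nat \<Rightarrow> nat \<Rightarrow> real" where "ee j = (\<lambda>l. if l = j then 1 else 0)"
definition zr :: "nat \<Rightarrow> real" where "zr = (\<lambda>_. 0)"
definition sig :: "nat \<Rightarrow> (nat \<Rightarrow> nat set) \<Rightarrow> nat \<Rightarrow> nat" where
  "sig k S i = (SOME j. j \<in> {1..k} \<and> i \<in> S j)"
definition gS :: "nat \<Rightarrow> (nat \<Rightarrow> nat set) \<Rightarrow> nat \<Rightarrow> (nat \<Rightarrow> real) \<Rightarrow> real" where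
  "gS k S i r = (if \<exists>j\<in>{1..k}. i \<in> S j then r (sig k S i) else 1 - (\<Sum>j=1..k. r j))"

lemma orthants_finite: "finite (orthants n k)"
proof -
  have "orthants n k \<subseteq> {S. \<forall>x. (x \<in> {1..k} \<longrightarrow> S x \<in> Pow {1..n}) \<and> (x \<notin> {1..k} \<longrightarrow> S x = {})}"
    by (auto simp: orthants_def)
  then show ?thesis by (rule finite_subset) (rule finite_set_of_finite_funs, auto)
qed

lemma sig_prop: assumes "j \<in> {1..k}" "i \<in> S j"
  shows "sig k S i \<in> {1..k} \<and> i \<in> S (sig k S i)"
  unfolding sig_def by (rule someI[of _ j]) (use assms in auto)

lemma sig_unique: assumes "S \<in> orthants n k" "j \<in> {1..k}" "i \<in> S j"
  shows "sig k S i = j"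
  using sig_prop[of j k i S, OF assms(2,3)] assms unfolding orthants_def by blast

lemma term_prod:
  assumes S: "S \<in> orthants n k"
  shows "(\<Prod>j\<in>{1..k}. \<Prod>i\<in>S j. x i j) * (\<Prod>i\<in>{1..n} - (\<Union>j\<in>{1..k}. S j). 1 - (\<Sum>j=1..k. x i j))
     = (\<Prod>i\<in>{1..n}. gS k S i (x i))"
proof -
  let ?U = "\<Union>j\<in>{1..k}. S j"
  have U: "?U \<subseteq> {1..n}" using S by (auto simp: orthants_def)
  have fin: "finite (S j)" if "j \<in> {1..k}" for j
  proof -
    have "S j \<subseteq> {1..n}" using S that by (auto simp: orthants_def)
    then show ?thesis by (rule finite_subset) simp
  qed
  have "(\<Prod>j\<in>{1..k}. \<Prod>i\<in>S j. x i j) = (\<Prod>j\<in>{1..k}. \<Prod>i\<in>S j. x i (sig k S i))"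
    by (rule prod.cong, simp, rule prod.cong, simp, simp add: sig_unique[OF S])
  also have "\<dots> = (\<Prod>i\<in>?U. x i (sig k S i))"
    by (rule prod.UNION_disjoint[symmetric]) (use S fin in \<open>auto simp: orthants_def\<close>)
  also have "\<dots> = (\<Prod>i\<in>?U. gS k S i (x i))"
    by (rule prod.cong) (auto simp: gS_def)
  finally have 1: "(\<Prod>j\<in>{1..k}. \<Prod>i\<in>S j. x i j) = (\<Prod>i\<in>?U. gS k S i (x i))" .
  have 2: "(\<Prod>i\<in>{1..n} - ?U. 1 - (\<Sum>j=1..k. x i j)) = (\<Prod>i\<in>{1..n} - ?U. gS k S i (x i))"
    by (rule prod.cong) (auto simp: gS_def)
  show ?thesis unfolding 1 2 using prod.subset_diff[OF U, of "\<lambda>i. gS k S i (x i)"] by (simp add: mult.commute)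
qed

lemma F_prod: "multilinear_ext n k f x = (\<Sum>S\<in>orthants n k. f S * (\<Prod>i\<in>{1..n}. gS k S i (x i)))"
  unfolding multilinear_ext_def
proof (rule sum.cong)
  fix S assume "S \<in> orthants n k"
  from term_prod[OF this, of x] show "f S * (\<Prod>j\<in>{1..k}. \<Prod>i\<in>S j. x i j) * (\<Prod>i\<in>{1..n} - (\<Union>j\<in>{1..k}. S j). 1 - (\<Sum>j=1..k. x i j))
     = f S * (\<Prod>i\<in>{1..n}. gS k S i (x i))" by (simp add: mult.assoc)
qed simp

lemma gS_aff: "gS k S i r = (\<Sum>j=1..k. r j * gS k S i (ee j)) + (1 - (\<Sum>j=1..k. r j)) * gS k S i zr"
proof (cases "\<exists>j\<in>{1..k}. i \<in> S j")
  case True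
  then obtain j0 where j0: "j0 \<in> {1..k}" "i \<in> S j0" by blast
  have s: "sig k S i \<in> {1..k}" using sig_prop[of j0 k i S, OF j0] by blast
  have g1: "gS k S i r' = r' (sig k S i)" for r' using True by (simp add: gS_def)
  have "(\<Sum>j=1..k. r j * gS k S i (ee j)) = (\<Sum>j=1..k. if j = sig k S i then r j else 0)"
    by (rule sum.cong) (auto simp: g1 ee_def)
  also have "\<dots> = r (sig k S i)" using s by (simp add: sum.delta)
  finally show ?thesis by (simp add: g1 zr_def)
next
  case False
  have g0: "gS k S i r' = 1 - (\<Sum>j=1..k. r' j)" for r' using False by (simp add: gS_def)
  have "(\<Sum>j=1..k. r j * gS k S i (ee j)) = 0"
    by (rule sum.neutral) (auto simp: g0 ee_def)
  then show ?thesis by (simp add: g0 zr_def)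
qed

definition RE :: "nat \<Rightarrow> nat \<Rightarrow> ((nat\<Rightarrow>nat\<Rightarrow>real)\<Rightarrow>real) \<Rightarrow> bool" where
 "RE n k H = (\<forall>i\<in>{1..n}. \<forall>x. H x = (\<Sum>j=1..k. x i j * H (x(i := ee j)))
      + (1 - (\<Sum>j=1..k. x i j)) * H (x(i := zr)))"

lemma F_RE: "RE n k (multilinear_ext n k f)"
  unfolding RE_def
proof (intro ballI allI)
  fix i x assume i: "i \<in> {1..n}"
  define R where "R S = (\<Prod>i'\<in>{1..n}-{i}. gS k S i' (x i'))" for S
  have upd: "multilinear_ext n k f (x(i := r)) = (\<Sum>S\<in>orthants n k. f S * gS k S i r * R S)" for r
  proof -
    have "(\<Prod>i'\<in>{1..n}. gS k S i' ((x(i := r)) i')) = gS k S i r * R S" for S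
    proof -
      have "(\<Prod>i'\<in>{1..n}. gS k S i' ((x(i := r)) i')) = gS k S i ((x(i := r)) i) * (\<Prod>i'\<in>{1..n}-{i}. gS k S i' ((x(i := r)) i'))"
        by (rule prod.remove[OF _ i]) simp
      also have "(\<Prod>i'\<in>{1..n}-{i}. gS k S i' ((x(i := r)) i')) = R S"
        unfolding R_def by (rule prod.cong) auto
      finally show ?thesis by simp
    qed
    then show ?thesis unfolding F_prod by (simp add: mult.assoc)
  qed
  have "x = x(i := x i)" by simp
  then have "multilinear_ext n k f x = (\<Sum>S\<in>orthants n k. f S * gS k S i (x i) * R S)"
    using upd[of "x i"] by metis
  also have "\<dots> = (\<Sum>S\<in>orthants n k. (\<Sum>j=1..k. x i j * (f S * gS k S i (ee j) * R S))
        + (1 - (\<Sum>j=1..k. x i j)) * (f S * gS k S i zr * R S))"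
    by (rule sum.cong, simp, subst gS_aff) (simp add: algebra_simps sum_distrib_left sum_distrib_right)
  also have "\<dots> = (\<Sum>j=1..k. x i j * (\<Sum>S\<in>orthants n k. f S * gS k S i (ee j) * R S))
        + (1 - (\<Sum>j=1..k. x i j)) * (\<Sum>S\<in>orthants n k. f S * gS k S i zr * R S)"
  proof -
    have "(\<Sum>S\<in>orthants n k. \<Sum>j=1..k. x i j * (f S * gS k S i (ee j) * R S))
       = (\<Sum>j=1..k. x i j * (\<Sum>S\<in>orthants n k. f S * gS k S i (ee j) * R S))"
      by (subst sum.swap) (simp add: sum_distrib_left)
    then show ?thesis by (simp add: sum.distrib sum_distrib_left)
  qed
  finally show "multilinear_ext n k f x = (\<Sum>j=1..k. x i j * multilinear_ext n k f (x(i := ee j)))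
      + (1 - (\<Sum>j=1..k. x i j)) * multilinear_ext n k f (x(i := zr))"
    by (simp add: upd)
qed

definition intg :: "nat \<Rightarrow> nat \<Rightarrow> (nat\<Rightarrow>nat\<Rightarrow>real) \<Rightarrow> bool" where
  "intg n k x = (\<forall>i\<in>{1..n}. x i = zr \<or> (\<exists>j\<in>{1..k}. x i = ee j))"
definition Sx :: "nat \<Rightarrow> nat \<Rightarrow> (nat\<Rightarrow>nat\<Rightarrow>real) \<Rightarrow> (nat \<Rightarrow> nat set)" where
  "Sx n k x = (\<lambda>l. if l \<in> {1..k} then {i\<in>{1..n}. x i = ee l} else {})"
definition slope :: "((nat\<Rightarrow>nat\<Rightarrow>real)\<Rightarrow>real) \<Rightarrow> nat \<Rightarrow> nat \<Rightarrow> (nat\<Rightarrow>nat\<Rightarrow>real) \<Rightarrow> real" where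
  "slope H i j x = H (x(i := ee j)) - H (x(i := zr))"
definition upd :: "(nat\<Rightarrow>nat\<Rightarrow>real) \<Rightarrow> nat \<Rightarrow> nat \<Rightarrow> real \<Rightarrow> (nat\<Rightarrow>nat\<Rightarrow>real)" where
  "upd x i j t = x(i := (x i)(j := t))"

lemma ee_eq[simp]: "ee j = ee l \<longleftrightarrow> j = l"
  by (metis ee_def zero_neq_one)
lemma ee_zr[simp]: "ee j \<noteq> zr" "zr \<noteq> ee j"
  by (metis ee_def zr_def zero_neq_one)+
lemma sum_ee: "j \<in> {1..k} \<Longrightarrow> (\<Sum>l=1..k. ee j l) = 1"
  by (simp add: ee_def sum.delta')
lemma sum_ee'[simp]: "Suc 0 \<le> j \<Longrightarrow> j \<le> k \<Longrightarrow> sum (ee j) {Suc 0..k} = 1"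
  using sum_ee[of j k] by simp
lemma sum_zr: "(\<Sum>l=1..k. zr l) = 0" by (simp add: zr_def)

lemma Sx_mem: "i \<in> Sx n k x l \<longleftrightarrow> l \<in> {1..k} \<and> i \<in> {1..n} \<and> x i = ee l"
  by (auto simp: Sx_def)

lemma Sx_orth: "Sx n k x \<in> orthants n k"
  unfolding orthants_def by (auto simp: Sx_def)

lemma gS_vals:
  assumes S: "S \<in> orthants n k"
  shows "j \<in> {1..k} \<Longrightarrow> gS k S i (ee j) = (if i \<in> S j then 1 else 0)"
    and "gS k S i zr = (if \<exists>j\<in>{1..k}. i \<in> S j then 0 else 1)"
proof -
  assume j: "j \<in> {1..k}"
  show "gS k S i (ee j) = (if i \<in> S j then 1 else 0)"
  proof (cases "\<exists>l\<in>{1..k}. i \<in> S l")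
    case True
    then obtain l where l: "l \<in> {1..k}" "i \<in> S l" by blast
    then have "sig k S i = l" using sig_unique[OF S] by blast
    moreover have "i \<in> S j \<longleftrightarrow> j = l" using S l j unfolding orthants_def by blast
    ultimately show ?thesis using True by (auto simp: gS_def ee_def)
  next
    case False
    then show ?thesis using j by (auto simp: gS_def sum_ee)
  qed
next
  show "gS k S i zr = (if \<exists>j\<in>{1..k}. i \<in> S j then 0 else 1)"
    by (auto simp: gS_def zr_def)
qed

lemma F_intg:
  assumes "intg n k x"
  shows "multilinear_ext n k f x = f (Sx n k x)"
proof -
  have key: "(\<Prod>i\<in>{1..n}. gS k S i (x i)) = (if S = Sx n k x then 1 else 0)" if S: "S \<in> orthants n k" for S
  proof (cases "S = Sx n k x")
    case True
    have "gS k S i (x i) = 1" if i: "i \<in> {1..n}" for i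
    proof -
      from assms i have "x i = zr \<or> (\<exists>j\<in>{1..k}. x i = ee j)" by (auto simp: intg_def)
      then show ?thesis
      proof
        assume "x i = zr"
        then have "\<not> (\<exists>j\<in>{1..k}. i \<in> S j)" using True by (auto simp: Sx_mem)
        then show ?thesis using gS_vals(2)[OF S] \<open>x i = zr\<close> by simp
      next
        assume "\<exists>j\<in>{1..k}. x i = ee j"
        then obtain j where j: "j \<in> {1..k}" "x i = ee j" by blast
        then have "i \<in> S j" using True i by (simp add: Sx_mem)
        then show ?thesis using gS_vals(1)[OF S j(1)] j by simp
      qed
    qed
    then show ?thesis using True by simp
  next
    case False
    then obtain l where l: "S l \<noteq> Sx n k x l" by blast
    have lk: "l \<in> {1..k}"
    proof (rule ccontr)
      assume "l \<notin> {1..k}"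
      then have "S l = {}" "Sx n k x l = {}" using S by (auto simp: orthants_def Sx_def)
      then show False using l by simp
    qed
    have Sl: "S l \<subseteq> {1..n}" using S lk by (auto simp: orthants_def)
    have "\<exists>i. (i \<in> S l) \<noteq> (i \<in> Sx n k x l)" using l by blast
    then obtain i where i0: "(i \<in> S l) \<noteq> (i \<in> Sx n k x l)" by blast
    have "Sx n k x l \<subseteq> {1..n}" by (auto simp: Sx_mem)
    then have i: "i \<in> {1..n}" "(i \<in> S l) \<noteq> (i \<in> Sx n k x l)" using i0 Sl by auto
    from assms i have xi: "x i = zr \<or> (\<exists>j\<in>{1..k}. x i = ee j)" by (auto simp: intg_def)
    have "gS k S i (x i) = 0"
    proof (cases "i \<in> S l")
      case True
      then have "x i \<noteq> ee l" using i lk by (auto simp: Sx_mem)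
      have "sig k S i = l" using sig_unique[OF S lk True] .
      then have "gS k S i (x i) = x i l" using True lk by (auto simp: gS_def)
      also have "\<dots> = 0" using xi \<open>x i \<noteq> ee l\<close> by (auto simp: zr_def ee_def)
      finally show ?thesis .
    next
      case False
      then have xl: "x i = ee l" using i by (auto simp: Sx_mem)
      show ?thesis using gS_vals(1)[OF S lk] False xl by simp
    qed
    then have "(\<Prod>i\<in>{1..n}. gS k S i (x i)) = 0" using i(1) by (intro prod_zero) auto
    then show ?thesis using False by simp
  qed
  have "multilinear_ext n k f x = (\<Sum>S\<in>orthants n k. f S * (if S = Sx n k x then 1 else 0))"
    unfolding F_prod by (intro sum.cong refl) (simp only: key)
  also have "\<dots> = f (Sx n k x)"
  proof -
    have "(\<Sum>S\<in>orthants n k. f S * (if S = Sx n k x then 1 else 0)) = (\<Sum>S\<in>orthants n k. if S = Sx n k x then f S else 0)"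
      by (rule sum.cong) auto
    also have "\<dots> = f (Sx n k x)" using Sx_orth[of n k x] by (simp add: sum.delta' orthants_finite)
    finally show ?thesis .
  qed
  finally show ?thesis .
qed

lemma RE_const: "RE n k (\<lambda>x. c)"
  unfolding RE_def by (simp add: algebra_simps sum_distrib_left sum_distrib_right)

lemma RE_add: assumes "RE n k H" "RE n k G" shows "RE n k (\<lambda>x. H x + G x)"
  unfolding RE_def
proof (intro ballI allI)
  fix i x assume i: "i \<in> {1..n}"
  have h1: "H x = (\<Sum>j=1..k. x i j * H (x(i := ee j))) + (1 - (\<Sum>j=1..k. x i j)) * H (x(i := zr))"
    using assms(1) i unfolding RE_def by blast
  have h2: "G x = (\<Sum>j=1..k. x i j * G (x(i := ee j))) + (1 - (\<Sum>j=1..k. x i j)) * G (x(i := zr))"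
    using assms(2) i unfolding RE_def by blast
  show "H x + G x = (\<Sum>j=1..k. x i j * (H (x(i := ee j)) + G (x(i := ee j))))
      + (1 - (\<Sum>j=1..k. x i j)) * (H (x(i := zr)) + G (x(i := zr)))"
    using h1 h2 by (simp only: distrib_left sum.distrib)
qed

lemma RE_scale: assumes "RE n k H" shows "RE n k (\<lambda>x. a * H x)"
  unfolding RE_def
proof (intro ballI allI)
  fix i x assume i: "i \<in> {1..n}"
  have h1: "H x = (\<Sum>j=1..k. x i j * H (x(i := ee j))) + (1 - (\<Sum>j=1..k. x i j)) * H (x(i := zr))"
    using assms(1) i unfolding RE_def by blast
  have s: "(\<Sum>j=1..k. x i j * (a * H (x(i := ee j)))) = a * (\<Sum>j=1..k. x i j * H (x(i := ee j)))"
    by (simp add: sum_distrib_left mult.left_commute)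
  show "a * H x = (\<Sum>j=1..k. x i j * (a * H (x(i := ee j))))
      + (1 - (\<Sum>j=1..k. x i j)) * (a * H (x(i := zr)))"
    by (simp only: s h1) (simp add: algebra_simps)
qed

lemma RE_diff: "RE n k H \<Longrightarrow> RE n k G \<Longrightarrow> RE n k (\<lambda>x. H x - G x)"
  using RE_add[of n k H "\<lambda>x. (-1) * G x"] RE_scale[of n k G "-1"] by simp

lemma RE_upd: assumes "RE n k H" shows "RE n k (\<lambda>x. H (x(i0 := r)))"
  unfolding RE_def
proof (intro ballI allI)
  fix i x assume i: "i \<in> {1..n}"
  show "H (x(i0 := r)) = (\<Sum>j = 1..k. x i j * H (x(i := ee j, i0 := r))) +
          (1 - (\<Sum>j = 1..k. x i j)) * H (x(i := zr, i0 := r))"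
  proof (cases "i = i0")
    case True
    then show ?thesis by (simp add: algebra_simps sum_distrib_right[symmetric])
  next
    case False
    have "H (x(i0 := r)) = (\<Sum>j = 1..k. (x(i0 := r)) i j * H ((x(i0 := r))(i := ee j))) +
          (1 - (\<Sum>j = 1..k. (x(i0 := r)) i j)) * H ((x(i0 := r))(i := zr))"
      using assms i unfolding RE_def by blast
    then show ?thesis using False by (simp add: fun_upd_twist)
  qed
qed

lemma RE_slope: "RE n k H \<Longrightarrow> RE n k (slope H i j)"
  unfolding slope_def[abs_def] by (intro RE_diff RE_upd)

lemma RE_coord:
  assumes H: "RE n k H" and i: "i \<in> {1..n}" and j: "j \<in> {1..k}"
  shows "H (upd x i j t) = H x + (t - x i j) * slope H i j x"
proof -
  let ?y = "upd x i j t"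
  have yi: "?y i l = x i l + (if l = j then t - x i j else 0)" for l by (simp add: upd_def)
  have yr: "?y(i := r) = x(i := r)" for r by (simp add: upd_def)
  have "H ?y = (\<Sum>l=1..k. ?y i l * H (?y(i := ee l))) + (1 - (\<Sum>l=1..k. ?y i l)) * H (?y(i := zr))"
    using H i unfolding RE_def by blast
  also have "\<dots> = ((\<Sum>l=1..k. x i l * H (x(i := ee l))) + (1 - (\<Sum>l=1..k. x i l)) * H (x(i := zr)))
       + (t - x i j) * slope H i j x"
  proof -
    have s1: "(\<Sum>l=1..k. ?y i l * H (x(i := ee l))) = (\<Sum>l=1..k. x i l * H (x(i := ee l))) + (t - x i j) * H (x(i := ee j))"
    proof -
      have "(\<Sum>l=1..k. ?y i l * H (x(i := ee l))) = (\<Sum>l=1..k. x i l * H (x(i := ee l)) + (if l = j then (t - x i j) * H (x(i := ee j)) else 0))"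
        by (rule sum.cong) (auto simp: yi algebra_simps)
      also have "\<dots> = (\<Sum>l=1..k. x i l * H (x(i := ee l))) + (t - x i j) * H (x(i := ee j))"
        using j by (simp add: sum.distrib)
      finally show ?thesis .
    qed
    have s2: "(\<Sum>l=1..k. ?y i l) = (\<Sum>l=1..k. x i l) + (t - x i j)"
    proof -
      have "(\<Sum>l=1..k. ?y i l) = (\<Sum>l=1..k. x i l + (if l = j then (t - x i j) else 0))"
        by (rule sum.cong) (auto simp: yi)
      also have "\<dots> = (\<Sum>l=1..k. x i l) + (t - x i j)"
        using j by (simp add: sum.distrib)
      finally show ?thesis .
    qed
    show ?thesis unfolding yr s1 s2 slope_def by (simp add: algebra_simps)
  qed
  also have "(\<Sum>l=1..k. x i l * H (x(i := ee l))) + (1 - (\<Sum>l=1..k. x i l)) * H (x(i := zr)) = H x"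
    using H i unfolding RE_def by metis
  finally show ?thesis .
qed

lemma partial_slope:
  assumes i: "i \<in> {1..n}" and j: "j \<in> {1..k}"
  shows "partial_ij (multilinear_ext n k f) x i j = slope (multilinear_ext n k f) i j x"
proof -
  let ?F = "multilinear_ext n k f"
  have eq: "(\<lambda>t. ?F (x(i := (x i)(j := t)))) = (\<lambda>t. ?F x + (t - x i j) * slope ?F i j x)"
    using RE_coord[OF F_RE i j] by (simp add: upd_def)
  have "((\<lambda>t. ?F x + (t - x i j) * slope ?F i j x) has_field_derivative slope ?F i j x) (at (x i j))"
    by (auto intro!: derivative_eq_intros)
  then show ?thesis unfolding partial_ij_def eq by (rule DERIV_imp_deriv)
qed

lemma P_upd:
  assumes x: "x \<in> polytopeP n k"
  shows "j \<in> {1..k} \<Longrightarrow> x(i := ee j) \<in> polytopeP n k" and "x(i := zr) \<in> polytopeP n k"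
  using x by (auto simp: polytopeP_def ee_def zr_def sum.delta')

lemma intg_upd:
  assumes "intg n k x"
  shows "j \<in> {1..k} \<Longrightarrow> intg n k (x(i := ee j))" and "intg n k (x(i := zr))"
  using assms by (auto simp: intg_def)

lemma NN:
  assumes H: "RE n k H" and base: "\<And>y. y \<in> polytopeP n k \<Longrightarrow> intg n k y \<Longrightarrow> 0 \<le> H y"
    and x: "x \<in> polytopeP n k"
  shows "0 \<le> H x"
proof -
  have "\<forall>x\<in>polytopeP n k. (\<forall>i\<in>{1..n}. m < i \<longrightarrow> x i = zr \<or> (\<exists>j\<in>{1..k}. x i = ee j)) \<longrightarrow> 0 \<le> H x" for m
  proof (induction m)
    case 0
    then show ?case using base by (auto simp: intg_def)
  next
    case (Suc m)
    show ?case
    proof (intro ballI impI)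
      fix x assume xP: "x \<in> polytopeP n k"
        and xi: "\<forall>i\<in>{1..n}. Suc m < i \<longrightarrow> x i = zr \<or> (\<exists>j\<in>{1..k}. x i = ee j)"
      show "0 \<le> H x"
      proof (cases "Suc m \<le> n")
        case False
        then show ?thesis using Suc xP by auto
      next
        case True
        let ?i = "Suc m"
        have i: "?i \<in> {1..n}" using True by simp
        have e: "H x = (\<Sum>j=1..k. x ?i j * H (x(?i := ee j))) + (1 - (\<Sum>j=1..k. x ?i j)) * H (x(?i := zr))"
          using H i unfolding RE_def by blast
        have h1: "0 \<le> H (x(?i := ee j))" if j: "j \<in> {1..k}" for j
          using Suc.IH P_upd(1)[OF xP j] xi j by auto
        have h2: "0 \<le> H (x(?i := zr))"
          using Suc.IH P_upd(2)[OF xP] xi by auto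
        have c1: "0 \<le> x ?i j" if "j \<in> {1..k}" for j using xP i that by (auto simp: polytopeP_def)
        have c2: "0 \<le> 1 - (\<Sum>j=1..k. x ?i j)" using xP i by (auto simp: polytopeP_def)
        have "0 \<le> (\<Sum>j=1..k. x ?i j * H (x(?i := ee j)))"
          by (rule sum_nonneg) (use c1 h1 in auto)
        moreover have "0 \<le> (1 - (\<Sum>j=1..k. x ?i j)) * H (x(?i := zr))" using c2 h2 by simp
        ultimately show ?thesis using e by linarith
      qed
    qed
  qed
  from this[of n] x show ?thesis by auto
qed

lemma F_dep:
  assumes A: "\<forall>i\<in>{1..n}. \<forall>j\<in>{1..k}. x i j = y i j"
  shows "multilinear_ext n k f x = multilinear_ext n k f y"
proof -
  have p1: "(\<Prod>j\<in>{1..k}. \<Prod>i\<in>S j. x i j) = (\<Prod>j\<in>{1..k}. \<Prod>i\<in>S j. y i j)"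
    if S: "S \<in> orthants n k" for S
  proof (rule prod.cong[OF refl], rule prod.cong[OF refl])
    fix j i assume j: "j \<in> {1..k}" and i: "i \<in> S j"
    have "S j \<subseteq> {1..n}" using S j unfolding orthants_def by blast
    then show "x i j = y i j" using A i j by blast
  qed
  have p2: "(\<Prod>i\<in>{1..n} - (\<Union>j\<in>{1..k}. S j). 1 - (\<Sum>j=1..k. x i j)) = (\<Prod>i\<in>{1..n} - (\<Union>j\<in>{1..k}. S j). 1 - (\<Sum>j=1..k. y i j))" for S
  proof (rule prod.cong[OF refl])
    fix i assume "i \<in> {1..n} - (\<Union>j\<in>{1..k}. S j)"
    then have "i \<in> {1..n}" by blast
    then have "(\<Sum>j=1..k. x i j) = (\<Sum>j=1..k. y i j)" using A by (intro sum.cong) auto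
    then show "1 - (\<Sum>j=1..k. x i j) = 1 - (\<Sum>j=1..k. y i j)" by simp
  qed
  show ?thesis unfolding multilinear_ext_def
    by (rule sum.cong[OF refl]) (simp only: p1 p2)
qed

context
  fixes n k :: nat and f :: "(nat \<Rightarrow> nat set) \<Rightarrow> real"
  assumes fnn: "\<forall>S\<in>orthants n k. f S \<ge> 0"
begin

abbreviation "FF \<equiv> multilinear_ext n k f"
abbreviation "MM \<equiv> Max (f ` orthants n k)"

lemma F_lower: "x \<in> polytopeP n k \<Longrightarrow> 0 \<le> FF x"
  by (rule NN[OF F_RE]) (auto simp: F_intg Sx_orth fnn)

lemma F_upper: "x \<in> polytopeP n k \<Longrightarrow> FF x \<le> MM"
proof -
  assume x: "x \<in> polytopeP n k"
  have "0 \<le> MM - FF x"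
    by (rule NN[OF RE_diff[OF RE_const F_RE] _ x])
      (auto simp: F_intg Sx_orth orthants_finite)
  then show ?thesis by simp
qed

lemma slope_bound:
  assumes "x \<in> polytopeP n k" "j \<in> {1..k}"
  shows "\<bar>slope FF i j x\<bar> \<le> MM"
proof -
  have "0 \<le> FF (x(i := ee j))" "FF (x(i := ee j)) \<le> MM" "0 \<le> FF (x(i := zr))" "FF (x(i := zr)) \<le> MM"
    using F_lower[OF P_upd(1)[OF assms(1,2)]] F_upper[OF P_upd(1)[OF assms(1,2)]]
    F_lower[OF P_upd(2)[OF assms(1)]] F_upper[OF P_upd(2)[OF assms(1)]] by auto
  then show ?thesis unfolding slope_def by linarith
qed

lemma slope2_bound:
  assumes "x \<in> polytopeP n k" "j \<in> {1..k}" "j' \<in> {1..k}"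
  shows "\<bar>slope (slope FF i j) i' j' x\<bar> \<le> 2 * MM"
proof -
  have "\<bar>slope FF i j (x(i' := ee j'))\<bar> \<le> MM" "\<bar>slope FF i j (x(i' := zr))\<bar> \<le> MM"
    using slope_bound[OF P_upd(1)[OF assms(1,3)] assms(2)] slope_bound[OF P_upd(2)[OF assms(1)] assms(2)] by auto
  then show ?thesis unfolding slope_def[of "slope FF i j"] by linarith
qed

end

lemma meet_join1:
  assumes j: "j \<in> {1..k}" "j' \<in> {1..k}" "j \<noteq> j'"
  shows "kmeet (Sx n k (y(i := ee j))) (Sx n k (y(i := ee j'))) = Sx n k (y(i := zr))"
    and "kjoin k (Sx n k (y(i := ee j))) (Sx n k (y(i := ee j'))) = Sx n k (y(i := zr))"
  using j by (intro ext set_eqI; auto simp: kmeet_def kjoin_def Sx_def)+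

lemma meet_join2:
  assumes "i \<noteq> i'" "j \<in> {1..k}" "j' \<in> {1..k}"
  shows "kmeet (Sx n k (y(i' := zr, i := ee j))) (Sx n k (y(i' := ee j', i := zr))) = Sx n k (y(i' := zr, i := zr))"
    and "kjoin k (Sx n k (y(i' := zr, i := ee j))) (Sx n k (y(i' := ee j', i := zr))) = Sx n k (y(i' := ee j', i := ee j))"
  using assms by (intro ext set_eqI; auto simp: kmeet_def kjoin_def Sx_def)+

context
  fixes n k :: nat and f :: "(nat \<Rightarrow> nat set) \<Rightarrow> real"
  assumes fnn: "\<forall>S\<in>orthants n k. f S \<ge> 0"
  and ks: "k_submodular n k f"
begin

lemma pairwise:
  assumes x: "x \<in> polytopeP n k" and j: "j \<in> {1..k}" "j' \<in> {1..k}" "j \<noteq> j'"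
  shows "0 \<le> slope (FF n k f) i j x + slope (FF n k f) i j' x"
proof (rule NN[OF RE_add[OF RE_slope[OF F_RE] RE_slope[OF F_RE]] _ x])
  fix y assume y: "y \<in> polytopeP n k" "intg n k y"
  have "f (kmeet (Sx n k (y(i := ee j))) (Sx n k (y(i := ee j')))) + f (kjoin k (Sx n k (y(i := ee j))) (Sx n k (y(i := ee j'))))
     \<le> f (Sx n k (y(i := ee j))) + f (Sx n k (y(i := ee j')))"
    using ks Sx_orth unfolding k_submodular_def by blast
  then show "0 \<le> slope (FF n k f) i j y + slope (FF n k f) i j' y"
    unfolding meet_join1[OF j] slope_def
    using F_intg[OF intg_upd(1)[OF y(2) j(1)]] F_intg[OF intg_upd(1)[OF y(2) j(2)]] F_intg[OF intg_upd(2)[OF y(2)]]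
    by simp
qed

lemma second_diff:
  assumes x: "x \<in> polytopeP n k" and j: "j \<in> {1..k}" "j' \<in> {1..k}"
  shows "slope (slope (FF n k f) i j) i' j' x \<le> 0"
proof (cases "i = i'")
  case True
  then show ?thesis by (simp add: slope_def)
next
  case False
  have "0 \<le> (-1) * slope (slope (FF n k f) i j) i' j' x"
  proof (rule NN[OF RE_scale[OF RE_slope[OF RE_slope[OF F_RE]]] _ x])
    fix y assume y: "y \<in> polytopeP n k" "intg n k y"
    have "f (kmeet (Sx n k (y(i' := zr, i := ee j))) (Sx n k (y(i' := ee j', i := zr))))
        + f (kjoin k (Sx n k (y(i' := zr, i := ee j))) (Sx n k (y(i' := ee j', i := zr))))
     \<le> f (Sx n k (y(i' := zr, i := ee j))) + f (Sx n k (y(i' := ee j', i := zr)))"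
      using ks Sx_orth unfolding k_submodular_def by blast
    moreover have "intg n k (y(i' := zr, i := ee j))" "intg n k (y(i' := ee j', i := zr))"
        "intg n k (y(i' := zr, i := zr))" "intg n k (y(i' := ee j', i := ee j))"
      using y(2) j by (auto intro!: intg_upd)
    ultimately show "0 \<le> (-1) * slope (slope (FF n k f) i j) i' j' y"
      unfolding meet_join2[OF False j] slope_def by (simp add: F_intg)
  qed
  then show ?thesis by simp
qed

end

definition mix :: "(nat \<times> nat) set \<Rightarrow> (nat\<Rightarrow>nat\<Rightarrow>real) \<Rightarrow> (nat\<Rightarrow>nat\<Rightarrow>real) \<Rightarrow> (nat\<Rightarrow>nat\<Rightarrow>real)" where
  "mix A p q = (\<lambda>i j. if (i, j) \<in> A then q i j else p i j)"

lemma mix_lemma: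
  assumes H: "RE n k H" and A: "finite A" "A \<subseteq> {1..n} \<times> {1..k}"
    and pq: "\<forall>i\<in>{1..n}. \<forall>j\<in>{1..k}. p i j \<le> q i j"
    and bnd: "\<And>y i j. i \<in> {1..n} \<Longrightarrow> j \<in> {1..k} \<Longrightarrow>
       (\<forall>i\<in>{1..n}. \<forall>j\<in>{1..k}. p i j \<le> y i j \<and> y i j \<le> q i j) \<Longrightarrow>
       lo i j \<le> slope H i j y \<and> slope H i j y \<le> hi i j"
  shows "(\<Sum>(i,j)\<in>A. (q i j - p i j) * lo i j) \<le> H (mix A p q) - H p
       \<and> H (mix A p q) - H p \<le> (\<Sum>(i,j)\<in>A. (q i j - p i j) * hi i j)"
  using A
proof (induction A rule: finite_induct)
  case empty
  have "mix {} p q = p" by (simp add: mix_def)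
  then show ?case by simp
next
  case (insert c A)
  obtain i j where c: "c = (i, j)" by (cases c)
  have i: "i \<in> {1..n}" and j: "j \<in> {1..k}" using insert.prems c by auto
  have IH: "(\<Sum>(i,j)\<in>A. (q i j - p i j) * lo i j) \<le> H (mix A p q) - H p
       \<and> H (mix A p q) - H p \<le> (\<Sum>(i,j)\<in>A. (q i j - p i j) * hi i j)"
    using insert by auto
  have m: "mix (insert c A) p q = upd (mix A p q) i j (q i j)"
    unfolding mix_def upd_def c by (intro ext) auto
  have mij: "mix A p q i j = p i j" using insert.hyps(2) c by (simp add: mix_def)
  have e: "H (mix (insert c A) p q) = H (mix A p q) + (q i j - p i j) * slope H i j (mix A p q)"
    unfolding m RE_coord[OF H i j] mij ..
  have btw: "\<forall>i\<in>{1..n}. \<forall>j\<in>{1..k}. p i j \<le> mix A p q i j \<and> mix A p q i j \<le> q i j"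
    using pq by (auto simp: mix_def)
  have b: "lo i j \<le> slope H i j (mix A p q)" "slope H i j (mix A p q) \<le> hi i j"
    using bnd[OF i j btw] by auto
  have d: "0 \<le> q i j - p i j" using pq i j by auto
  have "(q i j - p i j) * lo i j \<le> (q i j - p i j) * slope H i j (mix A p q)"
    using mult_left_mono[OF b(1) d] .
  moreover have "(q i j - p i j) * slope H i j (mix A p q) \<le> (q i j - p i j) * hi i j"
    using mult_left_mono[OF b(2) d] .
  ultimately show ?case using IH e insert.hyps c by (simp add: sum.insert)
qed

lemma P_between:
  assumes p: "p \<in> polytopeP n k" and q: "q \<in> polytopeP n k"
    and y: "\<forall>i\<in>{1..n}. \<forall>j\<in>{1..k}. p i j \<le> y i j \<and> y i j \<le> q i j"
  shows "y \<in> polytopeP n k"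
  unfolding polytopeP_def
proof (intro CollectI conjI ballI)
  fix i j assume i: "i \<in> {1..n}" and j: "j \<in> {1..k}"
  have "0 \<le> p i j" "q i j \<le> 1" using p q i j unfolding polytopeP_def by blast+
  moreover have "p i j \<le> y i j" "y i j \<le> q i j" using y i j by blast+
  ultimately show "0 \<le> y i j" "y i j \<le> 1" by linarith+
next
  fix i assume i: "i \<in> {1..n}"
  have "(\<Sum>j=1..k. y i j) \<le> (\<Sum>j=1..k. q i j)" using y i by (intro sum_mono) auto
  also have "\<dots> \<le> 1" using q i unfolding polytopeP_def by blast
  finally show "(\<Sum>j=1..k. y i j) \<le> 1" .
qed

lemma sum_C: "(\<Sum>(i,j)\<in>{1..n}\<times>{1..k}. g i j) = (\<Sum>i=1..n. \<Sum>j=1..k. g i j)"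
  by (rule sum.cartesian_product[symmetric])

lemma mix_C: "\<forall>i\<in>{1..n}. \<forall>j\<in>{1..k}. mix ({1..n}\<times>{1..k}) p q i j = q i j"
  unfolding mix_def by auto

context
  fixes n k :: nat and f :: "(nat \<Rightarrow> nat set) \<Rightarrow> real"
  assumes fnn: "\<forall>S\<in>orthants n k. f S \<ge> 0"
  and ks: "k_submodular n k f"
begin

lemma slope_mono:
  assumes p: "p \<in> polytopeP n k" and q: "q \<in> polytopeP n k"
    and pq: "\<forall>i\<in>{1..n}. \<forall>j\<in>{1..k}. p i j \<le> q i j"
    and i: "i \<in> {1..n}" and j: "j \<in> {1..k}"
  shows "- 2 * MM n k f * (\<Sum>i'=1..n. \<Sum>j'=1..k. q i' j' - p i' j') \<le> slope (FF n k f) i j q - slope (FF n k f) i j p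
       \<and> slope (FF n k f) i j q - slope (FF n k f) i j p \<le> 0"
proof -
  let ?C = "{1..n}\<times>{1..k}"
  have h: "(\<Sum>(i',j')\<in>?C. (q i' j' - p i' j') * (- 2 * MM n k f)) \<le> slope (FF n k f) i j (mix ?C p q) - slope (FF n k f) i j p
       \<and> slope (FF n k f) i j (mix ?C p q) - slope (FF n k f) i j p \<le> (\<Sum>(i',j')\<in>?C. (q i' j' - p i' j') * 0)"
  proof (rule mix_lemma[OF RE_slope[OF F_RE] _ _ pq])
    fix y i' j' assume i': "i' \<in> {1..n}" and j': "j' \<in> {1..k}"
      and y: "\<forall>i\<in>{1..n}. \<forall>j\<in>{1..k}. p i j \<le> y i j \<and> y i j \<le> q i j"
    have yP: "y \<in> polytopeP n k" by (rule P_between[OF p q y])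
    show "- 2 * MM n k f \<le> slope (slope (FF n k f) i j) i' j' y \<and> slope (slope (FF n k f) i j) i' j' y \<le> 0"
      using second_diff[OF fnn ks yP j j'] slope2_bound[OF fnn yP j j', of i i'] by (simp add: abs_le_iff)
  qed auto
  have eq1: "slope (FF n k f) i j (mix ?C p q) = slope (FF n k f) i j q"
    unfolding slope_def using mix_C[of n k p q]
    by (intro arg_cong2[where f="(-)"] F_dep) auto
  have eq2: "(\<Sum>(i',j')\<in>?C. (q i' j' - p i' j') * (- 2 * MM n k f)) = - 2 * MM n k f * (\<Sum>i'=1..n. \<Sum>j'=1..k. q i' j' - p i' j')"
    unfolding sum_C by (simp add: sum_distrib_left mult.commute)
  have eq3: "(\<Sum>(i',j')\<in>?C. (q i' j' - p i' j') * 0) = 0" by simp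
  show ?thesis using h unfolding eq1 eq2 eq3 .
qed

lemma F_step:
  assumes p: "p \<in> polytopeP n k" and q: "q \<in> polytopeP n k"
    and pq: "\<forall>i\<in>{1..n}. \<forall>j\<in>{1..k}. p i j \<le> q i j"
  shows "(\<Sum>i=1..n. \<Sum>j=1..k. (q i j - p i j) * slope (FF n k f) i j q) \<le> FF n k f q - FF n k f p
       \<and> FF n k f q - FF n k f p \<le> (\<Sum>i=1..n. \<Sum>j=1..k. (q i j - p i j) * slope (FF n k f) i j p)"
proof -
  let ?C = "{1..n}\<times>{1..k}"
  have h: "(\<Sum>(i,j)\<in>?C. (q i j - p i j) * slope (FF n k f) i j q) \<le> FF n k f (mix ?C p q) - FF n k f p
       \<and> FF n k f (mix ?C p q) - FF n k f p \<le> (\<Sum>(i,j)\<in>?C. (q i j - p i j) * slope (FF n k f) i j p)"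
  proof (rule mix_lemma[OF F_RE _ _ pq])
    fix y i j assume i: "i \<in> {1..n}" and j: "j \<in> {1..k}"
      and y: "\<forall>i\<in>{1..n}. \<forall>j\<in>{1..k}. p i j \<le> y i j \<and> y i j \<le> q i j"
    have yP: "y \<in> polytopeP n k" by (rule P_between[OF p q y])
    show "slope (FF n k f) i j q \<le> slope (FF n k f) i j y \<and> slope (FF n k f) i j y \<le> slope (FF n k f) i j p"
    proof -
      have y1: "\<forall>i\<in>{1..n}. \<forall>j\<in>{1..k}. y i j \<le> q i j" and y2: "\<forall>i\<in>{1..n}. \<forall>j\<in>{1..k}. p i j \<le> y i j"
        using y by blast+
      have "slope (FF n k f) i j q - slope (FF n k f) i j y \<le> 0" using slope_mono[OF yP q y1 i j] by blast
      moreover have "slope (FF n k f) i j y - slope (FF n k f) i j p \<le> 0" using slope_mono[OF p yP y2 i j] by blast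
      ultimately show ?thesis by linarith
    qed
  qed auto
  have eq1: "FF n k f (mix ?C p q) = FF n k f q"
    using mix_C[of n k p q] by (intro F_dep) auto
  show ?thesis using h unfolding eq1 sum_C .
qed

end

lemma intg_P: assumes "intg n k y" shows "y \<in> polytopeP n k"
  unfolding polytopeP_def
proof (intro CollectI conjI ballI)
  fix i assume i: "i \<in> {1..n}"
  then have yi: "y i = zr \<or> (\<exists>j\<in>{1..k}. y i = ee j)" using assms by (auto simp: intg_def)
  fix j assume j: "j \<in> {1..k}"
  show "0 \<le> y i j" "y i j \<le> 1" using yi by (auto simp: zr_def ee_def)
next
  fix i assume i: "i \<in> {1..n}"
  then have yi: "y i = zr \<or> (\<exists>j\<in>{1..k}. y i = ee j)" using assms by (auto simp: intg_def)
  then show "(\<Sum>j=1..k. y i j) \<le> 1"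
  proof
    assume "y i = zr" then show ?thesis by (simp add: zr_def)
  next
    assume "\<exists>j\<in>{1..k}. y i = ee j"
    then obtain j where "j \<in> {1..k}" "y i = ee j" by blast
    then show ?thesis using sum_ee[of j k] by simp
  qed
qed

definition XS :: "nat \<Rightarrow> (nat \<Rightarrow> nat set) \<Rightarrow> nat \<Rightarrow> nat \<Rightarrow> real" where
  "XS k S = (\<lambda>i. if \<exists>j\<in>{1..k}. i \<in> S j then ee (sig k S i) else zr)"

lemma XS_props:
  assumes S: "S \<in> orthants n k"
  shows "intg n k (XS k S)" "Sx n k (XS k S) = S"
proof -
  show "intg n k (XS k S)"
    unfolding intg_def
  proof
    fix i
    show "XS k S i = zr \<or> (\<exists>j\<in>{1..k}. XS k S i = ee j)"
    proof (cases "\<exists>j\<in>{1..k}. i \<in> S j")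
      case True
      then obtain j where j: "j \<in> {1..k}" "i \<in> S j" by blast
      have sg: "sig k S i \<in> {1..k}" using sig_prop[of j k i S] j by blast
      have "XS k S i = ee (sig k S i)" using True by (simp add: XS_def)
      then show ?thesis using sg by blast
    next
      case False
      then show ?thesis by (simp add: XS_def)
    qed
  qed
  show "Sx n k (XS k S) = S"
  proof (intro ext set_eqI)
    fix l i
    show "i \<in> Sx n k (XS k S) l \<longleftrightarrow> i \<in> S l"
    proof (cases "l \<in> {1..k}")
      case False
      then have "S l = {}" using S by (auto simp: orthants_def)
      moreover have "Sx n k (XS k S) l = {}" using False unfolding Sx_def by auto
      ultimately show ?thesis by simp
    next
      case True
      show ?thesis
      proof
        assume "i \<in> Sx n k (XS k S) l"
        then have i: "i \<in> {1..n}" and e: "XS k S i = ee l" by (auto simp: Sx_mem)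
        then have ex: "\<exists>j\<in>{1..k}. i \<in> S j" by (auto simp: XS_def split: if_splits)
        then have "ee (sig k S i) = ee l" using e by (simp add: XS_def)
        then have "sig k S i = l" by simp
        then show "i \<in> S l" using ex sig_prop by blast
      next
        assume il: "i \<in> S l"
        have "S l \<subseteq> {1..n}" using S True unfolding orthants_def by blast
        then have i: "i \<in> {1..n}" using il by blast
        have "sig k S i = l" using sig_unique[OF S True il] .
        then have "XS k S i = ee l" using il True by (auto simp: XS_def)
        then show "i \<in> Sx n k (XS k S) l" using i True by (simp add: Sx_mem)
      qed
    qed
  qed
qed

context
  fixes n k :: nat and f :: "(nat \<Rightarrow> nat set) \<Rightarrow> real"
  assumes fnn: "\<forall>S\<in>orthants n k. f S \<ge> 0"
  and ks: "k_submodular n k f"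
  and k2: "k \<ge> 2"
begin

lemma exists_full:
  assumes y: "intg n k y"
  shows "\<exists>E. (\<forall>i\<in>{1..n}. \<exists>j\<in>{1..k}. E i = ee j) \<and> FF n k f y \<le> FF n k f E"
proof -
  have "\<forall>y. intg n k y \<longrightarrow> (\<forall>i\<in>{1..n}. m < i \<longrightarrow> y i \<noteq> zr) \<longrightarrow>
     (\<exists>E. (\<forall>i\<in>{1..n}. \<exists>j\<in>{1..k}. E i = ee j) \<and> FF n k f y \<le> FF n k f E)" for m
  proof (induction m)
    case 0
    show ?case
    proof (intro allI impI)
      fix y assume "intg n k y" "\<forall>i\<in>{1..n}. 0 < i \<longrightarrow> y i \<noteq> zr"
      then have "\<forall>i\<in>{1..n}. \<exists>j\<in>{1..k}. y i = ee j" by (auto simp: intg_def)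
      then show "\<exists>E. (\<forall>i\<in>{1..n}. \<exists>j\<in>{1..k}. E i = ee j) \<and> FF n k f y \<le> FF n k f E" by blast
    qed
  next
    case (Suc m)
    show ?case
    proof (intro allI impI)
      fix y assume y: "intg n k y" and ny: "\<forall>i\<in>{1..n}. Suc m < i \<longrightarrow> y i \<noteq> zr"
      show "\<exists>E. (\<forall>i\<in>{1..n}. \<exists>j\<in>{1..k}. E i = ee j) \<and> FF n k f y \<le> FF n k f E"
      proof (cases "Suc m \<le> n \<and> y (Suc m) = zr")
        case False
        have "\<forall>i\<in>{1..n}. m < i \<longrightarrow> y i \<noteq> zr"
        proof (intro ballI impI)
          fix i assume i: "i \<in> {1..n}" and mi: "m < i"
          show "y i \<noteq> zr"
          proof (cases "i = Suc m")
            case True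
            then show ?thesis using False i by simp
          next
            case False
            then have "Suc m < i" using mi by simp
            then show ?thesis using ny i by blast
          qed
        qed
        then show ?thesis using Suc.IH y by blast
      next
        case True
        let ?i = "Suc m"
        have yy: "y(?i := zr) = y" using True by auto
        have j12: "(1::nat) \<in> {1..k}" "(2::nat) \<in> {1..k}" "(1::nat) \<noteq> 2" using k2 by auto
        have "0 \<le> slope (FF n k f) ?i 1 y + slope (FF n k f) ?i 2 y"
          using pairwise[OF fnn ks intg_P[OF y] j12] .
        then have "FF n k f y \<le> FF n k f (y(?i := ee 1)) \<or> FF n k f y \<le> FF n k f (y(?i := ee 2))"
          unfolding slope_def yy by linarith
        then obtain j where j: "j \<in> {1..k}" and le: "FF n k f y \<le> FF n k f (y(?i := ee j))"
          using j12 by blast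
        have "intg n k (y(?i := ee j))" using intg_upd(1)[OF y j] .
        moreover have "\<forall>i\<in>{1..n}. m < i \<longrightarrow> (y(?i := ee j)) i \<noteq> zr"
        proof (intro ballI impI)
          fix i assume i: "i \<in> {1..n}" and mi: "m < i"
          show "(y(?i := ee j)) i \<noteq> zr"
          proof (cases "i = Suc m")
            case True
            then show ?thesis by simp
          next
            case False
            then have "Suc m < i" using mi by simp
            then show ?thesis using ny i False by simp
          qed
        qed
        ultimately obtain E where "(\<forall>i\<in>{1..n}. \<exists>j\<in>{1..k}. E i = ee j)" "FF n k f (y(?i := ee j)) \<le> FF n k f E"
          using Suc.IH by blast
        then show ?thesis using le order_trans by blast
      qed
    qed
  qed
  from this[of n] y show ?thesis by auto
qed

lemma exists_opt:
  "\<exists>E. (\<forall>i\<in>{1..n}. \<exists>j\<in>{1..k}. E i = ee j) \<and> MM n k f \<le> FF n k f E"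
proof -
  have ne: "(\<lambda>j. {}) \<in> orthants n k" by (simp add: orthants_def)
  have "MM n k f \<in> f ` orthants n k" by (rule Max_in) (use orthants_finite ne in auto)
  then obtain S where S: "S \<in> orthants n k" "f S = MM n k f" by (metis imageE)
  have "FF n k f (XS k S) = f S" using F_intg[OF XS_props(1)[OF S(1)]] XS_props(2)[OF S(1)] by simp
  then show ?thesis using exists_full[OF XS_props(1)[OF S(1)]] S(2) by auto
qed

end

lemma gd_cong:
  assumes "good_direction n k c y v" "\<forall>i\<in>{1..n}. \<forall>j\<in>{1..k}. y i j = y' i j"
  shows "good_direction n k c y' v"
proof -
  have s: "(\<Sum>i=1..n. \<Sum>j=1..k. v i j * y i j) = (\<Sum>i=1..n. \<Sum>j=1..k. v i j * y' i j)"
    using assms(2) by (intro sum.cong refl) auto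
  show ?thesis unfolding good_direction_def s
  proof (intro allI impI)
    fix a :: "nat \<Rightarrow> nat \<Rightarrow> real" and jstar :: "nat \<Rightarrow> nat"
    assume h1: "\<forall>i\<in>{1..n}. \<forall>j\<in>{1..k}. \<forall>j'\<in>{1..k}. j \<noteq> j' \<longrightarrow> 0 \<le> a i j + a i j'"
      and h2: "\<forall>i\<in>{1..n}. \<forall>j\<in>{1..k}. a i j \<le> y' i j" and h3: "\<forall>i\<in>{1..n}. jstar i \<in> {1..k}"
    have h2': "\<forall>i\<in>{1..n}. \<forall>j\<in>{1..k}. a i j \<le> y i j" using h2 assms(2) by simp
    show "(\<Sum>i=1..n. \<Sum>j=1..k. v i j * (a i (jstar i) - a i j)) \<le> c * (\<Sum>i=1..n. \<Sum>j=1..k. v i j * y' i j)"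
      using assms(1) h1 h2' h3 unfolding good_direction_def s by blast
  qed
qed

lemma sum2_mono: "(\<And>i j. i \<in> {1..n} \<Longrightarrow> j \<in> {1..k} \<Longrightarrow> g i j \<le> h i j) \<Longrightarrow>
   (\<Sum>i=1..n. \<Sum>j=1..k. g i j) \<le> (\<Sum>i=1..n. \<Sum>j=1..k. (h i j :: real))"
  by (intro sum_mono) auto

lemma sum2_cong: "(\<And>i j. i \<in> {1..n} \<Longrightarrow> j \<in> {1..k} \<Longrightarrow> g i j = h i j) \<Longrightarrow>
   (\<Sum>i=1..n. \<Sum>j=1..k. g i j) = (\<Sum>i=1..n. \<Sum>j=1..k. (h i j :: real))"
  by (intro sum.cong refl) auto

lemma sum2_lin: "(\<Sum>i=1..n. \<Sum>j=1..k. a * g i j - b * h i j) =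
   a * (\<Sum>i=1..n. \<Sum>j=1..k. g i j) - b * (\<Sum>i=1..n. \<Sum>j=1..k. (h i j :: real))"
  by (simp add: sum_subtractf sum_distrib_left)

lemma sum2_lin2: "(\<Sum>i=1..n. \<Sum>j=1..k. a * g i j + b * h i j) =
   a * (\<Sum>i=1..n. \<Sum>j=1..k. g i j) + b * (\<Sum>i=1..n. \<Sum>j=1..k. (h i j :: real))"
  by (simp add: sum.distrib sum_distrib_left)

context
  fixes n k :: nat and f :: "(nat \<Rightarrow> nat set) \<Rightarrow> real"
  assumes fnn: "\<forall>S\<in>orthants n k. f S \<ge> 0"
  and ks: "k_submodular n k f"
begin

lemma step:
  fixes x x' w z z' v E :: "nat \<Rightarrow> nat \<Rightarrow> real" and oj :: "nat \<Rightarrow> nat" and \<delta> c :: real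
  assumes Px: "x \<in> polytopeP n k" and Px': "x' \<in> polytopeP n k" and Pw: "w \<in> polytopeP n k"
    and Pz: "z \<in> polytopeP n k" and Pz': "z' \<in> polytopeP n k"
    and \<delta>: "0 \<le> \<delta>" and c: "0 \<le> c"
    and hx': "\<forall>i\<in>{1..n}. \<forall>j\<in>{1..k}. x' i j = x i j + \<delta> * v i j"
    and hz: "\<forall>i\<in>{1..n}. \<forall>j\<in>{1..k}. z i j = w i j + \<delta> * E i j"
    and hz': "\<forall>i\<in>{1..n}. \<forall>j\<in>{1..k}. z' i j = w i j + \<delta> * v i j"
    and hxz: "\<forall>i\<in>{1..n}. \<forall>j\<in>{1..k}. x i j \<le> z i j"
    and v0: "\<forall>i\<in>{1..n}. \<forall>j\<in>{1..k}. 0 \<le> v i j"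
    and v1: "\<forall>i\<in>{1..n}. (\<Sum>j=1..k. v i j) = 1"
    and Eo: "\<forall>i\<in>{1..n}. oj i \<in> {1..k} \<and> (\<forall>j\<in>{1..k}. E i j = (if j = oj i then 1 else 0))"
    and gd: "good_direction n k c (\<lambda>i j. slope (FF n k f) i j x) v"
  shows "FF n k f z - FF n k f z' \<le> c * (FF n k f x' - FF n k f x) + (4 + 2 * c) * MM n k f * (real n)^2 * \<delta>^2"
proof -
  let ?F = "FF n k f"
  let ?D = "\<lambda>p i j. slope ?F i j p"
  define M where "M = MM n k f"
  define e where "e = 2 * M * \<delta> * real n"
  have E0: "\<forall>i\<in>{1..n}. \<forall>j\<in>{1..k}. 0 \<le> E i j" using Eo by auto
  have sumv: "(\<Sum>i=1..n. \<Sum>j=1..k. v i j) = real n" using v1 by simp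
  have sumE1: "(\<Sum>j=1..k. E i j) = 1" if i: "i \<in> {1..n}" for i
  proof -
    have "(\<Sum>j=1..k. E i j) = (\<Sum>j=1..k. if j = oj i then 1 else 0)" using Eo i by (intro sum.cong) auto
    then show ?thesis using Eo i by simp
  qed
  have sumE: "(\<Sum>i=1..n. \<Sum>j=1..k. E i j) = real n" using sumE1 by simp
  have xx': "\<forall>i\<in>{1..n}. \<forall>j\<in>{1..k}. x i j \<le> x' i j" using hx' v0 \<delta> by simp
  have s1: "?D x' i j \<ge> ?D x i j - e" if "i \<in> {1..n}" "j \<in> {1..k}" for i j
  proof -
    have "(\<Sum>i'=1..n. \<Sum>j'=1..k. x' i' j' - x i' j') = (\<Sum>i'=1..n. \<Sum>j'=1..k. \<delta> * v i' j')"
      using hx' by (intro sum2_cong) auto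
    also have "\<dots> = \<delta> * real n" using sumv by (simp add: sum_distrib_left[symmetric])
    finally show ?thesis using slope_mono[OF fnn ks Px Px' xx' that] unfolding e_def M_def
      by (simp add: algebra_simps)
  qed
  have A1: "\<delta> * (\<Sum>i=1..n. \<Sum>j=1..k. v i j * ?D x i j) - \<delta> * e * real n \<le> ?F x' - ?F x"
  proof -
    have "\<delta> * (\<Sum>i=1..n. \<Sum>j=1..k. v i j * ?D x i j) - \<delta> * e * real n
        = (\<Sum>i=1..n. \<Sum>j=1..k. \<delta> * (v i j * ?D x i j) - (\<delta> * e) * v i j)"
      unfolding sum2_lin sumv ..
    also have "\<dots> \<le> (\<Sum>i=1..n. \<Sum>j=1..k. (x' i j - x i j) * ?D x' i j)"
    proof (rule sum2_mono)
      fix i j assume ij: "i \<in> {1..n}" "j \<in> {1..k}"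
      have "0 \<le> \<delta> * v i j" using \<delta> v0 ij by simp
      from mult_left_mono[OF s1[OF ij] this]
      show "\<delta> * (v i j * ?D x i j) - (\<delta> * e) * v i j \<le> (x' i j - x i j) * ?D x' i j"
        using hx' ij by (simp add: algebra_simps)
    qed
    also have "\<dots> \<le> ?F x' - ?F x" using F_step[OF fnn ks Px Px' xx'] by blast
    finally show ?thesis .
  qed
  have wz: "\<forall>i\<in>{1..n}. \<forall>j\<in>{1..k}. w i j \<le> z i j" using hz E0 \<delta> by simp
  have wz': "\<forall>i\<in>{1..n}. \<forall>j\<in>{1..k}. w i j \<le> z' i j" using hz' v0 \<delta> by simp
  have dwz: "(\<Sum>i'=1..n. \<Sum>j'=1..k. z i' j' - w i' j') = \<delta> * real n"
  proof -
    have "(\<Sum>i'=1..n. \<Sum>j'=1..k. z i' j' - w i' j') = (\<Sum>i'=1..n. \<Sum>j'=1..k. \<delta> * E i' j')"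
      using hz by (intro sum2_cong) auto
    also have "\<dots> = \<delta> * real n" using sumE by (simp add: sum_distrib_left[symmetric])
    finally show ?thesis .
  qed
  have dwz': "(\<Sum>i'=1..n. \<Sum>j'=1..k. z' i' j' - w i' j') = \<delta> * real n"
  proof -
    have "(\<Sum>i'=1..n. \<Sum>j'=1..k. z' i' j' - w i' j') = (\<Sum>i'=1..n. \<Sum>j'=1..k. \<delta> * v i' j')"
      using hz' by (intro sum2_cong) auto
    also have "\<dots> = \<delta> * real n" using sumv by (simp add: sum_distrib_left[symmetric])
    finally show ?thesis .
  qed
  have s2: "?D w i j \<le> ?D z i j + e" "?D z i j \<le> ?D w i j" if "i \<in> {1..n}" "j \<in> {1..k}" for i j
    using slope_mono[OF fnn ks Pw Pz wz that] unfolding dwz e_def M_def by (simp_all add: algebra_simps)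
  have s3: "?D z' i j \<ge> ?D z i j - e" if "i \<in> {1..n}" "j \<in> {1..k}" for i j
    using slope_mono[OF fnn ks Pw Pz' wz' that] s2(2)[OF that] unfolding dwz' e_def M_def by (simp add: algebra_simps)
  have A2: "?F z - ?F w \<le> \<delta> * (\<Sum>i=1..n. \<Sum>j=1..k. E i j * ?D z i j) + \<delta> * e * real n"
  proof -
    have "?F z - ?F w \<le> (\<Sum>i=1..n. \<Sum>j=1..k. (z i j - w i j) * ?D w i j)"
      using F_step[OF fnn ks Pw Pz wz] by blast
    also have "\<dots> \<le> (\<Sum>i=1..n. \<Sum>j=1..k. \<delta> * (E i j * ?D z i j) + (\<delta> * e) * E i j)"
    proof (rule sum2_mono)
      fix i j assume ij: "i \<in> {1..n}" "j \<in> {1..k}"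
      have "0 \<le> \<delta> * E i j" using \<delta> E0 ij by simp
      from mult_left_mono[OF s2(1)[OF ij] this]
      show "(z i j - w i j) * ?D w i j \<le> \<delta> * (E i j * ?D z i j) + (\<delta> * e) * E i j"
        using hz ij by (simp add: algebra_simps)
    qed
    also have "\<dots> = \<delta> * (\<Sum>i=1..n. \<Sum>j=1..k. E i j * ?D z i j) + \<delta> * e * real n"
      unfolding sum2_lin2 sumE ..
    finally show ?thesis .
  qed
  have A3: "\<delta> * (\<Sum>i=1..n. \<Sum>j=1..k. v i j * ?D z i j) - \<delta> * e * real n \<le> ?F z' - ?F w"
  proof -
    have "\<delta> * (\<Sum>i=1..n. \<Sum>j=1..k. v i j * ?D z i j) - \<delta> * e * real n
        = (\<Sum>i=1..n. \<Sum>j=1..k. \<delta> * (v i j * ?D z i j) - (\<delta> * e) * v i j)"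
      unfolding sum2_lin sumv ..
    also have "\<dots> \<le> (\<Sum>i=1..n. \<Sum>j=1..k. (z' i j - w i j) * ?D z' i j)"
    proof (rule sum2_mono)
      fix i j assume ij: "i \<in> {1..n}" "j \<in> {1..k}"
      have "0 \<le> \<delta> * v i j" using \<delta> v0 ij by simp
      from mult_left_mono[OF s3[OF ij] this]
      show "\<delta> * (v i j * ?D z i j) - (\<delta> * e) * v i j \<le> (z' i j - w i j) * ?D z' i j"
        using hz' ij by (simp add: algebra_simps)
    qed
    also have "\<dots> \<le> ?F z' - ?F w" using F_step[OF fnn ks Pw Pz' wz'] by blast
    finally show ?thesis .
  qed
  have G: "(\<Sum>i=1..n. \<Sum>j=1..k. v i j * (?D z i (oj i) - ?D z i j)) \<le> c * (\<Sum>i=1..n. \<Sum>j=1..k. v i j * ?D x i j)"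
  proof -
    have h1: "\<forall>i\<in>{1..n}. \<forall>j\<in>{1..k}. \<forall>j'\<in>{1..k}. j \<noteq> j' \<longrightarrow> 0 \<le> ?D z i j + ?D z i j'"
      using pairwise[OF fnn ks Pz] by blast
    have h2: "\<forall>i\<in>{1..n}. \<forall>j\<in>{1..k}. ?D z i j \<le> ?D x i j"
    proof (intro ballI)
      fix i j assume ij: "i \<in> {1..n}" "j \<in> {1..k}"
      show "?D z i j \<le> ?D x i j" using conjunct2[OF slope_mono[OF fnn ks Px Pz hxz ij]] by linarith
    qed
    have h3: "\<forall>i\<in>{1..n}. oj i \<in> {1..k}" using Eo by blast
    show ?thesis using gd[unfolded good_direction_def, rule_format, of "\<lambda>i j. ?D z i j" oj] h1 h2 h3 by blast
  qed
  have G2: "(\<Sum>i=1..n. \<Sum>j=1..k. v i j * (?D z i (oj i) - ?D z i j))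
      = (\<Sum>i=1..n. \<Sum>j=1..k. E i j * ?D z i j) - (\<Sum>i=1..n. \<Sum>j=1..k. v i j * ?D z i j)"
  proof -
    have "(\<Sum>j=1..k. v i j * (?D z i (oj i) - ?D z i j)) = (\<Sum>j=1..k. E i j * ?D z i j) - (\<Sum>j=1..k. v i j * ?D z i j)"
      if i: "i \<in> {1..n}" for i
    proof -
      have e1: "(\<Sum>j=1..k. v i j * (?D z i (oj i) - ?D z i j)) = (\<Sum>j=1..k. v i j) * ?D z i (oj i) - (\<Sum>j=1..k. v i j * ?D z i j)"
        by (simp add: algebra_simps sum_subtractf sum_distrib_right)
      have e2: "(\<Sum>j=1..k. v i j) = 1" using v1 i by blast
      have e3: "(\<Sum>j=1..k. E i j * ?D z i j) = ?D z i (oj i)"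
      proof -
        have "(\<Sum>j=1..k. E i j * ?D z i j) = (\<Sum>j=1..k. if j = oj i then ?D z i j else 0)"
          using Eo i by (intro sum.cong) auto
        also have "\<dots> = ?D z i (oj i)" using Eo i by (simp add: sum.delta')
        finally show ?thesis .
      qed
      have e4: "(\<Sum>j=1..k. v i j * (?D z i (oj i) - ?D z i j)) = ?D z i (oj i) - (\<Sum>j=1..k. v i j * ?D z i j)"
        using e1 unfolding e2 by simp
      show ?thesis using e4 e3 by linarith
    qed
    then show ?thesis by (simp add: sum_subtractf)
  qed
  have "?F z - ?F z' = (?F z - ?F w) - (?F z' - ?F w)" by simp
  also have "\<dots> \<le> \<delta> * ((\<Sum>i=1..n. \<Sum>j=1..k. E i j * ?D z i j) - (\<Sum>i=1..n. \<Sum>j=1..k. v i j * ?D z i j)) + 2 * (\<delta> * e * real n)"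
    using A2 A3 by (simp add: algebra_simps)
  also have "\<dots> \<le> \<delta> * (c * (\<Sum>i=1..n. \<Sum>j=1..k. v i j * ?D x i j)) + 2 * (\<delta> * e * real n)"
    using G G2 \<delta> by (simp add: mult_left_mono)
  also have "\<dots> \<le> c * (?F x' - ?F x + \<delta> * e * real n) + 2 * (\<delta> * e * real n)"
  proof -
    have "\<delta> * (\<Sum>i=1..n. \<Sum>j=1..k. v i j * ?D x i j) \<le> ?F x' - ?F x + \<delta> * e * real n" using A1 by simp
    from mult_left_mono[OF this c] show ?thesis by (simp add: algebra_simps)
  qed
  also have "\<dots> = c * (?F x' - ?F x) + (4 + 2 * c) * MM n k f * (real n)^2 * \<delta>^2"
    unfolding e_def M_def by (simp add: algebra_simps power2_eq_square)
  finally show ?thesis .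
qed

end

theorem mainTheorem4:
  fixes n k :: nat and f :: "(nat \<Rightarrow> nat set) \<Rightarrow> real" and c \<epsilon> :: real
  assumes "k \<ge> 2"
    and "\<forall>S\<in>orthants n k. f S \<ge> 0"
    and "k_submodular n k f"
    and "c > 0"
    and "\<epsilon> > 0"
  shows "\<exists>N0::nat. \<forall>N\<ge>N0. N > 0 \<longrightarrow>
           (\<forall>v :: nat \<Rightarrow> nat \<Rightarrow> nat \<Rightarrow> real.
              (\<forall>t<N. valid_direction n k (v t)
                 \<and> good_direction n k c
                     (\<lambda>i j. partial_ij (multilinear_ext n k f)
                              (traj (1 / real N) v t) i j) (v t))
              \<longrightarrow> traj (1 / real N) v N \<in> polytopeP n k
                \<and> multilinear_ext n k f (traj (1 / real N) v N)
                    \<ge> Max (f ` orthants n k) / (c + 1) - \<epsilon>)"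
proof -
  note fnn = assms(2) and ks = assms(3)
  have c: "0 < c" and eps: "0 < \<epsilon>" using assms by auto
  let ?F = "multilinear_ext n k f"
  define M where "M = Max (f ` orthants n k)"
  obtain E where Efull: "\<forall>i\<in>{1..n}. \<exists>j\<in>{1..k}. E i = ee j" and EM: "M \<le> ?F E"
    using exists_opt[OF fnn ks assms(1)] unfolding M_def by blast
  define oj where "oj i = (SOME j. j \<in> {1..k} \<and> E i = ee j)" for i
  have Eo: "\<forall>i\<in>{1..n}. oj i \<in> {1..k} \<and> (\<forall>j\<in>{1..k}. E i j = (if j = oj i then 1 else 0))"
  proof
    fix i assume i: "i \<in> {1..n}"
    have "\<exists>j. j \<in> {1..k} \<and> E i = ee j" using Efull i by blast
    then have h: "oj i \<in> {1..k} \<and> E i = ee (oj i)" unfolding oj_def by (rule someI_ex)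
    then show "oj i \<in> {1..k} \<and> (\<forall>j\<in>{1..k}. E i j = (if j = oj i then 1 else 0))"
      by (simp add: ee_def)
  qed
  have E0: "0 \<le> E i j" if "i \<in> {1..n}" "j \<in> {1..k}" for i j using Eo that by auto
  have sumE1: "(\<Sum>j=1..k. E i j) = 1" if i: "i \<in> {1..n}" for i
  proof -
    have "(\<Sum>j=1..k. E i j) = (\<Sum>j=1..k. if j = oj i then 1 else 0)" using Eo i by (intro sum.cong) auto
    then show ?thesis using Eo i by simp
  qed
  have zP: "(\<lambda>i j. 0) \<in> polytopeP n k" by (simp add: polytopeP_def)
  have M0: "0 \<le> M" using F_lower[OF fnn zP] F_upper[OF fnn zP] unfolding M_def by linarith
  define K where "K = (4 + 2 * c) * M * (real n)^2"
  have K0: "0 \<le> K" unfolding K_def using M0 c by simp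
  define N0 where "N0 = nat \<lceil>K / ((c + 1) * \<epsilon>)\<rceil> + 1"
  show ?thesis
  proof (rule exI[of _ N0], intro allI impI)
    fix N :: nat and v :: "nat \<Rightarrow> nat \<Rightarrow> nat \<Rightarrow> real"
    assume N: "N0 \<le> N" and Npos: "0 < N"
      and hv: "\<forall>t<N. valid_direction n k (v t) \<and> good_direction n k c
                     (\<lambda>i j. partial_ij ?F (traj (1 / real N) v t) i j) (v t)"
    define \<delta> where "\<delta> = 1 / real N"
    have \<delta>0: "0 < \<delta>" using Npos by (simp add: \<delta>_def)
    have N\<delta>: "real N * \<delta> = 1" using Npos by (simp add: \<delta>_def)
    have vd: "0 \<le> v t i j" if "t < N" "i \<in> {1..n}" "j \<in> {1..k}" for t i j
      using hv that unfolding valid_direction_def by blast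
    have vs: "(\<Sum>j=1..k. v t i j) = 1" if "t < N" "i \<in> {1..n}" for t i
      using hv that unfolding valid_direction_def by blast
    have trajc: "traj \<delta> v t i j = \<delta> * (\<Sum>\<tau><t. v \<tau> i j)" for t i j
      by (induction t) (simp_all add: algebra_simps)
    have traj0: "0 \<le> traj \<delta> v t i j" if "t \<le> N" "i \<in> {1..n}" "j \<in> {1..k}" for t i j
    proof -
      have "0 \<le> (\<Sum>\<tau><t. v \<tau> i j)" using vd that by (intro sum_nonneg) auto
      then show ?thesis unfolding trajc using \<delta>0 by simp
    qed
    have trajs: "(\<Sum>j=1..k. traj \<delta> v t i j) = \<delta> * real t" if "t \<le> N" "i \<in> {1..n}" for t i
    proof -
      have "(\<Sum>j=1..k. traj \<delta> v t i j) = \<delta> * (\<Sum>\<tau><t. \<Sum>j=1..k. v \<tau> i j)"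
        unfolding trajc sum_distrib_left[symmetric] by (subst sum.swap) simp
      also have "(\<Sum>\<tau><t. \<Sum>j=1..k. v \<tau> i j) = (\<Sum>\<tau><t. 1)" using vs that by (intro sum.cong) auto
      finally show ?thesis by simp
    qed
    define Ot where "Ot t \<alpha> = (\<lambda>i j. traj \<delta> v t i j + \<alpha> * E i j)" for t \<alpha>
    have OP: "Ot t \<alpha> \<in> polytopeP n k" if t: "t \<le> N" and a: "0 \<le> \<alpha>" and ta: "\<delta> * real t + \<alpha> \<le> 1" for t \<alpha>
    proof -
      have nn: "0 \<le> Ot t \<alpha> i j" if "i \<in> {1..n}" "j \<in> {1..k}" for i j
        using traj0[OF t that] E0[OF that] a unfolding Ot_def by simp
      have rs: "(\<Sum>j=1..k. Ot t \<alpha> i j) \<le> 1" if i: "i \<in> {1..n}" for i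
      proof -
        have "(\<Sum>j=1..k. Ot t \<alpha> i j) = (\<Sum>j=1..k. traj \<delta> v t i j) + \<alpha> * (\<Sum>j=1..k. E i j)"
          unfolding Ot_def by (simp add: sum.distrib sum_distrib_left)
        also have "\<dots> = \<delta> * real t + \<alpha>" using trajs[OF t i] sumE1[OF i] by simp
        finally show ?thesis using ta by simp
      qed
      have le1: "Ot t \<alpha> i j \<le> 1" if "i \<in> {1..n}" "j \<in> {1..k}" for i j
      proof -
        have "Ot t \<alpha> i j \<le> (\<Sum>j=1..k. Ot t \<alpha> i j)"
          by (rule member_le_sum) (use nn that in auto)
        then show ?thesis using rs[OF that(1)] by simp
      qed
      show ?thesis unfolding polytopeP_def using nn rs le1 by blast
    qed
    have sO: "traj \<delta> v t = Ot t 0" for t unfolding Ot_def by simp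
    define orb where "orb t = Ot t (1 - real t * \<delta>)" for t
    have stepineq: "?F (orb t) - ?F (orb (Suc t)) \<le> c * (?F (traj \<delta> v (Suc t)) - ?F (traj \<delta> v t)) + K * \<delta>^2"
      if t: "t < N" for t
    proof -
      define \<beta> where "\<beta> = 1 - real (Suc t) * \<delta>"
      have "real (Suc t) \<le> real N" using t by simp
      then have "real (Suc t) * \<delta> \<le> real N * \<delta>" using \<delta>0 by (simp add: mult_right_mono)
      then have \<beta>0: "0 \<le> \<beta>" unfolding \<beta>_def using N\<delta> by simp
      have tN: "t \<le> N" "Suc t \<le> N" using t by auto
      have Px: "traj \<delta> v t \<in> polytopeP n k" unfolding sO
        by (rule OP[OF tN(1)]) (use \<beta>0 \<delta>0 in \<open>simp_all add: \<beta>_def algebra_simps\<close>)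
      have Px': "traj \<delta> v (Suc t) \<in> polytopeP n k" unfolding sO
        by (rule OP[OF tN(2)]) (use \<beta>0 \<delta>0 in \<open>simp_all add: \<beta>_def algebra_simps\<close>)
      have Pw: "Ot t \<beta> \<in> polytopeP n k"
        by (rule OP[OF tN(1) \<beta>0]) (use \<delta>0 in \<open>simp add: \<beta>_def algebra_simps\<close>)
      have Pz: "orb t \<in> polytopeP n k" unfolding orb_def
        by (rule OP[OF tN(1)]) (use \<beta>0 \<delta>0 in \<open>simp_all add: \<beta>_def algebra_simps\<close>)
      have Pz': "orb (Suc t) \<in> polytopeP n k" unfolding orb_def
        by (rule OP[OF tN(2)]) (use \<beta>0 \<delta>0 in \<open>simp_all add: \<beta>_def algebra_simps\<close>)
      have hx': "\<forall>i\<in>{1..n}. \<forall>j\<in>{1..k}. traj \<delta> v (Suc t) i j = traj \<delta> v t i j + \<delta> * v t i j" by simp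
      have hz: "\<forall>i\<in>{1..n}. \<forall>j\<in>{1..k}. orb t i j = Ot t \<beta> i j + \<delta> * E i j"
        by (simp add: orb_def Ot_def \<beta>_def algebra_simps)
      have hz': "\<forall>i\<in>{1..n}. \<forall>j\<in>{1..k}. orb (Suc t) i j = Ot t \<beta> i j + \<delta> * v t i j"
        by (simp add: orb_def Ot_def \<beta>_def algebra_simps)
      have hxz: "\<forall>i\<in>{1..n}. \<forall>j\<in>{1..k}. traj \<delta> v t i j \<le> orb t i j"
      proof (intro ballI)
        fix i j assume ij: "i \<in> {1..n}" "j \<in> {1..k}"
        have "0 \<le> (1 - real t * \<delta>) * E i j" using \<beta>0 \<delta>0 E0[OF ij] unfolding \<beta>_def
          by (intro mult_nonneg_nonneg) (simp_all add: algebra_simps)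
        then show "traj \<delta> v t i j \<le> orb t i j" by (simp add: orb_def Ot_def)
      qed
      have v0: "\<forall>i\<in>{1..n}. \<forall>j\<in>{1..k}. 0 \<le> v t i j" using vd t by blast
      have v1: "\<forall>i\<in>{1..n}. (\<Sum>j=1..k. v t i j) = 1" using vs t by blast
      have gd0: "good_direction n k c (\<lambda>i j. partial_ij ?F (traj \<delta> v t) i j) (v t)"
        using hv t unfolding \<delta>_def by blast
      have gd: "good_direction n k c (\<lambda>i j. slope ?F i j (traj \<delta> v t)) (v t)"
        by (rule gd_cong[OF gd0]) (simp add: partial_slope)
      from step[OF fnn ks Px Px' Pw Pz Pz' less_imp_le[OF \<delta>0] less_imp_le[OF c] hx' hz hz' hxz v0 v1 Eo gd]
      show ?thesis unfolding K_def M_def by simp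
    qed
    have "(\<Sum>t<N. ?F (orb t) - ?F (orb (Suc t))) \<le> (\<Sum>t<N. c * (?F (traj \<delta> v (Suc t)) - ?F (traj \<delta> v t)) + K * \<delta>^2)"
      using stepineq by (intro sum_mono) auto
    also have "\<dots> = c * (\<Sum>t<N. ?F (traj \<delta> v (Suc t)) - ?F (traj \<delta> v t)) + (\<Sum>t<N. K * \<delta>^2)"
      by (simp only: sum.distrib sum_distrib_left)
    also have "(\<Sum>t<N. ?F (traj \<delta> v (Suc t)) - ?F (traj \<delta> v t)) = ?F (traj \<delta> v N) - ?F (traj \<delta> v 0)"
      by (rule sum_lessThan_telescope)
    also have "(\<Sum>t<N. K * \<delta>^2) = real N * (K * \<delta>^2)" by simp
    finally have tel: "?F (orb 0) - ?F (orb N) \<le> c * (?F (traj \<delta> v N) - ?F (traj \<delta> v 0)) + real N * (K * \<delta>^2)"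
      using sum_lessThan_telescope'[of "\<lambda>t. ?F (orb t)" N] by linarith
    have orb0: "orb 0 = E" by (simp add: orb_def Ot_def)
    have orbN: "orb N = traj \<delta> v N" using N\<delta> by (simp add: orb_def Ot_def)
    have s0: "traj \<delta> v 0 = (\<lambda>i j. 0)" by simp
    have Fs0: "0 \<le> ?F (traj \<delta> v 0)" unfolding s0 by (rule F_lower[OF fnn zP])
    have PN: "traj \<delta> v N \<in> polytopeP n k" unfolding sO
      by (rule OP) (use N\<delta> in \<open>simp_all add: mult.commute\<close>)
    have NK: "real N * (K * \<delta>^2) = K * \<delta>" using N\<delta> by (simp add: power2_eq_square algebra_simps)
    have t2: "?F E - ?F (traj \<delta> v N) \<le> c * (?F (traj \<delta> v N) - ?F (traj \<delta> v 0)) + K * \<delta>"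
      using tel unfolding orb0 orbN NK .
    have cs0: "0 \<le> c * ?F (traj \<delta> v 0)" using c Fs0 by simp
    have d1: "c * (?F (traj \<delta> v N) - ?F (traj \<delta> v 0)) = c * ?F (traj \<delta> v N) - c * ?F (traj \<delta> v 0)"
      by (simp add: right_diff_distrib)
    have d2: "(c + 1) * ?F (traj \<delta> v N) = c * ?F (traj \<delta> v N) + ?F (traj \<delta> v N)"
      by (simp add: distrib_right)
    have main: "M - K * \<delta> \<le> (c + 1) * ?F (traj \<delta> v N)"
      using t2 cs0 d1 d2 EM by linarith
    define x where "x = K / ((c + 1) * \<epsilon>)"
    have "x \<le> real (nat \<lceil>x\<rceil>)" by (rule real_nat_ceiling_ge)
    moreover have "real N0 = real (nat \<lceil>x\<rceil>) + 1" unfolding N0_def x_def by simp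
    moreover have "real N0 \<le> real N" using N by simp
    ultimately have xN: "x < real N" by linarith
    have pos: "0 < (c + 1) * \<epsilon>" using c eps by simp
    have "K < real N * ((c + 1) * \<epsilon>)" using xN unfolding x_def using pos_divide_less_eq[OF pos] by blast
    moreover have "K * \<delta> = K / real N" by (simp add: \<delta>_def)
    moreover have "0 < real N" using Npos by simp
    ultimately have Kd: "K * \<delta> < (c + 1) * \<epsilon>" using pos_divide_less_eq[of "real N" K "(c + 1) * \<epsilon>"]
      by (simp add: mult.commute)
    have m2: "M - (c + 1) * \<epsilon> \<le> (c + 1) * ?F (traj \<delta> v N)" using main Kd by linarith
    have c1: "0 < c + 1" using c by simp
    have "M / (c + 1) - \<epsilon> = (M - (c + 1) * \<epsilon>) / (c + 1)" using c1 by (simp add: diff_divide_distrib)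
    also have "\<dots> \<le> ?F (traj \<delta> v N)" using m2 pos_divide_le_eq[OF c1] by (simp add: mult.commute)
    finally have fin: "M / (c + 1) - \<epsilon> \<le> ?F (traj \<delta> v N)" .
    show "traj (1 / real N) v N \<in> polytopeP n k \<and> Max (f ` orthants n k) / (c + 1) - \<epsilon> \<le> ?F (traj (1 / real N) v N)"
      using PN fin unfolding \<delta>_def M_def by blast
  qed
qed

end
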